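(* Let $\mathcal{S}_1,\dots,\mathcal{S}_n\subseteq\mathbb{R}^D$ be independent linear subspaces (i.e. $\sum_{\ell=1}^n d_\ell=\dim(\sum_\ell\mathcal{S}_\ell)$, $d_\ell=\dim\mathcal{S}_\ell$), and let $\mathcal{X}=\{\boldsymbol{x}_1,\dots,\boldsymbol{x}_N\}\subseteq\bigcup_\ell\mathcal{S}_\ell$ consist of unit-norm vectors such that each $\mathcal{S}_\ell$ contains at least $d_\ell$ points of $\mathcal{X}$ spanning $\mathcal{S}_\ell$. Let $k\ge\sum_{\ell=1}^n d_\ell$ and let $\mathcal{X}_0^{(k)}$ be the output of the farthest first search procedure: $\mathcal{X}_0^{(1)}=\{\boldsymbol{x}_j\}$ for an arbitrary (e.g. random) $j$, and for $i=1,\dots,k-1$, $\mathcal{X}_0^{(i+1)}=\mathcal{X}_0^{(i)}\cup\{\boldsymbol{x}\}$ where $\boldsymbol{x}\in\arg\max_{\boldsymbol{x}_j\in\mathcal{X}}f_\infty(\boldsymbol{x}_j,\mathcal{X}_0^{(i)})$. Then $\mathcal{X}_0^{(k)}$ contains at least $d_\ell$ linearly independent points from each $\mathcal{S}_\ell$, and with $\mathcal{X}_0=\mathcal{X}_0^{(k)}$ the problem defining $f_\infty(\boldsymbol{x}_j,\mathcal{X}_0^{(k)})$ is feasible for every $\boldsymbol{x}_j\in\mathcal{X}$ and all of its optimal solutions are subspace-preserving.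
   Context: For $\mathcal{X}_0\subseteq\mathcal{X}$ and $\boldsymbol{x}_j\in\mathcal{X}$, $f_\infty(\boldsymbol{x}_j,\mathcal{X}_0):=\min_{\boldsymbol{c}\in\mathbb{R}^N}\|\boldsymbol{c}\|_1$ subject to $\boldsymbol{x}_j=\sum_{i:\boldsymbol{x}_i\in\mathcal{X}_0}c_i\boldsymbol{x}_i$, with $f_\infty(\boldsymbol{x}_j,\mathcal{X}_0):=\infty$ if infeasible. A vector $\boldsymbol{c}\in\mathbb{R}^N$ associated with $\boldsymbol{x}_j$ is subspace-preserving if $c_i\neq0$ implies that $\boldsymbol{x}_i$ and $\boldsymbol{x}_j$ lie in the same subspace $\mathcal{S}_\ell$. *)

theory Defs
  imports "HOL-Analysis.Analysis"
begin

text \<open>Data points are x 1, ..., x N (a function on indices {1..N}); coefficient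
  vectors c in R^N are functions nat => real, only the entries with index in {1..N}
  matter.\<close>

definition feasible_coef ::
  "nat \<Rightarrow> (nat \<Rightarrow> 'a::euclidean_space) \<Rightarrow> 'a \<Rightarrow> 'a set \<Rightarrow> (nat \<Rightarrow> real) \<Rightarrow> bool" where
  "feasible_coef N x y X0 c \<longleftrightarrow>
     (\<forall>i\<in>{1..N}. c i \<noteq> 0 \<longrightarrow> x i \<in> X0) \<and> y = (\<Sum>i=1..N. c i *\<^sub>R x i)"

definition l1norm :: "nat \<Rightarrow> (nat \<Rightarrow> real) \<Rightarrow> real" where
  "l1norm N c = (\<Sum>i=1..N. \<bar>c i\<bar>)"

text \<open>f_infinity(y, X0): minimal l1 norm of a feasible c; infinity (Inf of the empty set
  in ereal) if infeasible.\<close>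
definition f_inf ::
  "nat \<Rightarrow> (nat \<Rightarrow> 'a::euclidean_space) \<Rightarrow> 'a \<Rightarrow> 'a set \<Rightarrow> ereal" where
  "f_inf N x y X0 = Inf {ereal (l1norm N c) | c. feasible_coef N x y X0 c}"

definition optimal_coef ::
  "nat \<Rightarrow> (nat \<Rightarrow> 'a::euclidean_space) \<Rightarrow> 'a \<Rightarrow> 'a set \<Rightarrow> (nat \<Rightarrow> real) \<Rightarrow> bool" where
  "optimal_coef N x y X0 c \<longleftrightarrow>
     feasible_coef N x y X0 c \<and> ereal (l1norm N c) = f_inf N x y X0"

definition subspace_preserving ::
  "nat \<Rightarrow> (nat \<Rightarrow> 'a::euclidean_space set) \<Rightarrow> nat \<Rightarrow> (nat \<Rightarrow> 'a) \<Rightarrow> 'a \<Rightarrow> (nat \<Rightarrow> real) \<Rightarrow> bool" where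
  "subspace_preserving n S N x y c \<longleftrightarrow>
     (\<forall>i\<in>{1..N}. c i \<noteq> 0 \<longrightarrow> (\<exists>l\<in>{1..n}. x i \<in> S l \<and> y \<in> S l))"

definition ffs_run ::
  "nat \<Rightarrow> (nat \<Rightarrow> 'a::euclidean_space) \<Rightarrow> nat \<Rightarrow> (nat \<Rightarrow> 'a set) \<Rightarrow> bool" where
  "ffs_run N x k X0 \<longleftrightarrow>
     (\<exists>j0\<in>{1..N}. X0 1 = {x j0}) \<and>
     (\<forall>i\<in>{1..k-1}. \<exists>j\<in>{1..N}. X0 (i+1) = X0 i \<union> {x j} \<and>
        (\<forall>j'\<in>{1..N}. f_inf N x (x j') (X0 i) \<le> f_inf N x (x j) (X0 i)))"

end

theory Submission
  imports Defs
begin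

lemma dim_Un_le: "dim (A \<union> (B::'a::euclidean_space set)) \<le> dim A + dim B"
proof -
  have "dim (A \<union> B) = dim {x + y |x y. x \<in> span A \<and> y \<in> span B}"
    using dim_span[of "A \<union> B"] span_Un[of A B] by simp
  also have "\<dots> \<le> dim (span A) + dim (span B)"
    using dim_sums_Int[of "span A" "span B"] by simp
  finally show ?thesis by simp
qed

lemma dim_UN_le:
  assumes "finite L"
  shows "dim (\<Union>l\<in>L. (A l::'a::euclidean_space set)) \<le> (\<Sum>l\<in>L. dim (A l))"
  using assms
proof (induction L rule: finite_induct)
  case empty then show ?case by simp
next
  case (insert a L)
  have "dim (\<Union>l\<in>insert a L. A l) = dim (A a \<union> (\<Union>l\<in>L. A l))" by simp
  also have "\<dots> \<le> dim (A a) + dim (\<Union>l\<in>L. A l)" by (rule dim_Un_le)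
  also have "\<dots> \<le> dim (A a) + (\<Sum>l\<in>L. dim (A l))" using insert by simp
  finally show ?case using insert by simp
qed

lemma feas_imp_fin:
  assumes "feasible_coef N x y X0 c" shows "f_inf N x y X0 < \<infinity>"
proof -
  have "f_inf N x y X0 \<le> ereal (l1norm N c)"
    unfolding f_inf_def using assms by (intro Inf_lower) blast
  moreover have "ereal (l1norm N c) < \<infinity>" by simp
  ultimately show ?thesis by (rule order.strict_trans1)
qed

lemma nofeas_inf:
  assumes "\<not> (\<exists>c. feasible_coef N x y X0 c)" shows "f_inf N x y X0 = \<infinity>"
  unfolding f_inf_def using assms by (simp add: top_ereal_def)

lemma feas_span:
  assumes "feasible_coef N x y X0 c" shows "y \<in> span X0"
proof -
  have "y = (\<Sum>i=1..N. c i *\<^sub>R x i)" using assms feasible_coef_def by blast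
  also have "\<dots> \<in> span X0"
  proof (intro span_sum)
    fix i assume "i \<in> {1..N}"
    then show "c i *\<^sub>R x i \<in> span X0" using assms unfolding feasible_coef_def
    proof (cases "c i = 0")
      case True then show ?thesis by (simp add: span_zero)
    next
      case False
      then have "x i \<in> X0" using assms \<open>i \<in> {1..N}\<close> unfolding feasible_coef_def by blast
      then show ?thesis by (simp add: span_base span_scale)
    qed
  qed
  finally show ?thesis .
qed

lemma span_feas:
  assumes "X0 \<subseteq> x ` {1..N}" "y \<in> span X0"
  shows "\<exists>c. feasible_coef N x y X0 c"
proof -
  have fin: "finite X0" using assms(1) finite_subset by blast
  obtain u where u: "y = (\<Sum>v\<in>X0. u v *\<^sub>R v)" using assms(2) span_finite[OF fin] by auto
  define g where "g = (\<lambda>a. SOME i. i \<in> {1..N} \<and> x i = a)"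
  have g: "g a \<in> {1..N} \<and> x (g a) = a" if "a \<in> X0" for a
  proof -
    have "\<exists>i. i \<in> {1..N} \<and> x i = a" using assms(1) that by blast
    then show ?thesis unfolding g_def by (rule someI_ex)
  qed
  have inj: "inj_on g X0"
  proof (rule inj_onI)
    fix a b assume ab: "a \<in> X0" "b \<in> X0" "g a = g b"
    have "a = x (g a)" using g[OF ab(1)] by simp
    also have "\<dots> = x (g b)" using ab(3) by (rule arg_cong)
    also have "\<dots> = b" using g[OF ab(2)] by simp
    finally show "a = b" .
  qed
  define c where "c = (\<lambda>i. if i \<in> g ` X0 then u (x i) else 0)"
  have sub: "g ` X0 \<subseteq> {1..N}"
  proof
    fix i assume "i \<in> g ` X0"
    then obtain a where "a \<in> X0" "i = g a" by blast
    then show "i \<in> {1..N}" using g[of a] by simp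
  qed
  have "(\<Sum>i=1..N. c i *\<^sub>R x i) = (\<Sum>i\<in>g ` X0. c i *\<^sub>R x i)"
    by (rule sum.mono_neutral_right[OF _ sub]) (simp_all add: c_def)
  also have "\<dots> = (\<Sum>a\<in>X0. c (g a) *\<^sub>R x (g a))" by (rule sum.reindex[OF inj, unfolded comp_def])
  also have "\<dots> = (\<Sum>a\<in>X0. u a *\<^sub>R a)"
  proof (rule sum.cong)
    fix a assume a: "a \<in> X0"
    then have "g a \<in> g ` X0" by blast
    then show "c (g a) *\<^sub>R x (g a) = u a *\<^sub>R a" using g[OF a] unfolding c_def by simp
  qed simp
  finally have "y = (\<Sum>i=1..N. c i *\<^sub>R x i)" using u by simp
  moreover have "\<forall>i\<in>{1..N}. c i \<noteq> 0 \<longrightarrow> x i \<in> X0"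
  proof (intro ballI impI)
    fix i assume "c i \<noteq> 0"
    then have "i \<in> g ` X0" unfolding c_def by presburger
    then obtain a where "a \<in> X0" "i = g a" by blast
    then show "x i \<in> X0" using g by simp
  qed
  ultimately show ?thesis unfolding feasible_coef_def by blast
qed

lemma sum_le_eq_each:
  fixes f g :: "nat \<Rightarrow> nat"
  assumes "finite L" "\<forall>l\<in>L. f l \<le> g l" "sum g L \<le> sum f L" "l \<in> L"
  shows "f l = g l"
proof (rule ccontr)
  assume "f l \<noteq> g l"
  then have "f l < g l" using assms by force
  then have "sum f L < sum g L" using sum_strict_mono_ex1[OF assms(1,2)] assms(4) by blast
  then show False using assms(3) by simp
qed

theorem theorem2:
  fixes S :: "nat \<Rightarrow> 'a::euclidean_space set" and n :: nat
    and x :: "nat \<Rightarrow> 'a" and N :: nat and k :: nat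
    and X0 :: "nat \<Rightarrow> 'a set"
  assumes subsp: "\<forall>l\<in>{1..n}. subspace (S l)"
    and indep: "(\<Sum>l=1..n. dim (S l)) = dim (span (\<Union>l\<in>{1..n}. S l))"
    and in_union: "\<forall>i\<in>{1..N}. \<exists>l\<in>{1..n}. x i \<in> S l"
    and unit: "\<forall>i\<in>{1..N}. norm (x i) = 1"
    and spanning: "\<forall>l\<in>{1..n}. \<exists>T. T \<subseteq> x ` {1..N} \<inter> S l \<and> finite T \<and>
                      card T \<ge> dim (S l) \<and> span T = S l"
    and k_ge: "k \<ge> (\<Sum>l=1..n. dim (S l))"
    and ffs: "ffs_run N x k X0"
  shows "(\<forall>l\<in>{1..n}. \<exists>T. T \<subseteq> X0 k \<inter> S l \<and> finite T \<and> independent T \<and>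
                      card T \<ge> dim (S l))
    \<and> (\<forall>j\<in>{1..N}. (\<exists>c. feasible_coef N x (x j) (X0 k) c) \<and>
          (\<forall>c. optimal_coef N x (x j) (X0 k) c \<longrightarrow> subspace_preserving n S N x (x j) c))"
proof -
  define Xs where "Xs = x ` {1..N}"
  define U where "U = (\<Union>l\<in>{1..n}. S l)"
  define D where "D = (\<Sum>l=1..n. dim (S l))"
  have DU: "D = dim U" using indep unfolding D_def U_def by simp
  have XsU: "Xs \<subseteq> U" using in_union unfolding Xs_def U_def by blast
  obtain j0 where j0: "j0 \<in> {1..N}" "X0 1 = {x j0}" using ffs unfolding ffs_run_def by blast
  have nz: "x i \<noteq> 0" if "i \<in> {1..N}" for i using unit that by force
  have inv: "X0 (m+1) \<subseteq> Xs \<and> (Xs \<subseteq> span (X0 (m+1)) \<or> m+1 \<le> dim (X0 (m+1)))"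
    if "m + 1 \<le> k" for m
    using that
  proof (induction m)
    case 0
    then show ?case using j0 nz[OF j0(1)] unfolding Xs_def by auto
  next
    case (Suc m)
    then have IH: "X0 (m+1) \<subseteq> Xs \<and> (Xs \<subseteq> span (X0 (m+1)) \<or> m+1 \<le> dim (X0 (m+1)))"
      by simp
    have "m+1 \<in> {1..k-1}" using Suc.prems by simp
    then obtain j where j: "j \<in> {1..N}" "X0 (m+1+1) = X0 (m+1) \<union> {x j}"
      "\<forall>j'\<in>{1..N}. f_inf N x (x j') (X0 (m+1)) \<le> f_inf N x (x j) (X0 (m+1))"
      using ffs unfolding ffs_run_def by blast
    have sub: "X0 (Suc m + 1) \<subseteq> Xs" using IH j unfolding Xs_def by auto
    show ?case
    proof (cases "Xs \<subseteq> span (X0 (m+1))")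
      case True
      then have "Xs \<subseteq> span (X0 (Suc m+1))" using j(2)
        by (metis Suc_eq_plus1 Un_upper1 span_mono subset_trans)
      then show ?thesis using sub by blast
    next
      case False
      then obtain j' where j': "j' \<in> {1..N}" "x j' \<notin> span (X0 (m+1))"
        unfolding Xs_def by blast
      have "\<not> (\<exists>c. feasible_coef N x (x j') (X0 (m+1)) c)" using j' feas_span by blast
      then have "f_inf N x (x j') (X0 (m+1)) = \<infinity>" by (rule nofeas_inf)
      then have "f_inf N x (x j) (X0 (m+1)) = \<infinity>" using j(3) j'(1)
        by (metis PInfty_neq_ereal(1) ereal_infty_less_eq(1))
      then have "\<not> (\<exists>c. feasible_coef N x (x j) (X0 (m+1)) c)" using feas_imp_fin by fastforce
      then have "x j \<notin> span (X0 (m+1))" using span_feas IH unfolding Xs_def by blast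
      then have "dim (X0 (Suc m+1)) = dim (X0 (m+1)) + 1" using j(2) dim_insert[of "x j" "X0 (m+1)"]
        by simp
      then show ?thesis using IH False sub by simp
    qed
  qed
  have D1: "1 \<le> D"
  proof -
    have "{x j0} \<subseteq> U" using XsU j0 unfolding Xs_def by blast
    then have "dim {x j0} \<le> dim U" by (rule dim_subset)
    then show ?thesis using nz[OF j0(1)] DU by simp
  qed
  then have k1: "1 \<le> k" using k_ge D_def by simp
  then have invk: "X0 k \<subseteq> Xs \<and> (Xs \<subseteq> span (X0 k) \<or> k \<le> dim (X0 k))"
    using inv[of "k-1"] by simp
  have SX0: "S l \<subseteq> span (X0 k)" if l: "l \<in> {1..n}" for l
  proof (cases "Xs \<subseteq> span (X0 k)")
    case True
    obtain T where T: "T \<subseteq> Xs \<inter> S l" "span T = S l" using spanning l unfolding Xs_def by blast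
    have "T \<subseteq> span (X0 k)" using T True by blast
    then have "span T \<subseteq> span (X0 k)" using span_mono[of T "span (X0 k)"] by (simp add: span_span)
    then show ?thesis using T by simp
  next
    case False
    then have "k \<le> dim (X0 k)" using invk by blast
    moreover have X0U': "X0 k \<subseteq> U" using invk XsU by blast
    moreover have "dim (X0 k) \<le> dim U" using X0U' by (rule dim_subset)
    ultimately have "dim U \<le> dim (X0 k)" using k_ge DU D_def by simp
    then have "span (X0 k) = span U" using dim_eq_span[OF X0U'] by simp
    moreover have "S l \<subseteq> U" using l unfolding U_def by blast
    ultimately show ?thesis using span_superset[of U] by blast
  qed
  have X0U: "X0 k \<subseteq> U" using invk XsU by blast
  have part1: "\<exists>T. T \<subseteq> X0 k \<inter> S l \<and> finite T \<and> independent T \<and> card T \<ge> dim (S l)"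
    if l: "l \<in> {1..n}" for l
  proof -
    have le: "\<forall>l\<in>{1..n}. dim (X0 k \<inter> S l) \<le> dim (S l)" by (simp add: dim_subset)
    have "U \<subseteq> span (X0 k)" using SX0 unfolding U_def by blast
    then have "dim U \<le> dim (X0 k)" by (rule dim_mono)
    also have "X0 k \<subseteq> (\<Union>l\<in>{1..n}. X0 k \<inter> S l)" using X0U unfolding U_def by blast
    then have "dim (X0 k) \<le> dim (\<Union>l\<in>{1..n}. X0 k \<inter> S l)" by (rule dim_subset)
    also have "\<dots> \<le> (\<Sum>l\<in>{1..n}. dim (X0 k \<inter> S l))" by (rule dim_UN_le) simp
    finally have "(\<Sum>l\<in>{1..n}. dim (S l)) \<le> (\<Sum>l\<in>{1..n}. dim (X0 k \<inter> S l))"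
      using DU D_def by simp
    then have eq: "dim (X0 k \<inter> S l) = dim (S l)"
      using sum_le_eq_each[of "{1..n}" "\<lambda>l. dim (X0 k \<inter> S l)" "\<lambda>l. dim (S l)" l] le l by simp
    obtain B where B: "B \<subseteq> X0 k \<inter> S l" "independent B" "card B = dim (X0 k \<inter> S l)"
      using basis_exists by metis
    show ?thesis using B eq independent_bound_general by (intro exI[of _ B]) auto
  qed
  have part2: "(\<exists>c. feasible_coef N x (x j) (X0 k) c) \<and>
          (\<forall>c. optimal_coef N x (x j) (X0 k) c \<longrightarrow> subspace_preserving n S N x (x j) c)"
    if j: "j \<in> {1..N}" for j
  proof
    obtain m where m: "m \<in> {1..n}" "x j \<in> S m" using in_union j by blast
    show "\<exists>c. feasible_coef N x (x j) (X0 k) c"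
      using span_feas[of "X0 k" x N "x j"] invk SX0[OF m(1)] m(2) unfolding Xs_def by blast
    show "\<forall>c. optimal_coef N x (x j) (X0 k) c \<longrightarrow> subspace_preserving n S N x (x j) c"
    proof (intro allI impI)
      fix c assume opt: "optimal_coef N x (x j) (X0 k) c"
      have feas: "feasible_coef N x (x j) (X0 k) c"
        and fopt: "ereal (l1norm N c) = f_inf N x (x j) (X0 k)"
        using opt unfolding optimal_coef_def by auto
      define L where "L = {1..n} - {m}"
      define R where "R = span (\<Union>l\<in>L. S l)"
      have subm: "subspace (S m)" using subsp m by blast
      have dimR: "dim R \<le> (\<Sum>l\<in>L. dim (S l))" unfolding R_def using dim_UN_le[of L S]
        by (simp add: L_def)
      have UL: "U = S m \<union> (\<Union>l\<in>L. S l)" unfolding U_def L_def using m(1) by blast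
      have sums: "{a + b |a b. a \<in> S m \<and> b \<in> R} = span U"
      proof -
        have sm: "span (S m) = S m" using subm by simp
        show ?thesis unfolding UL span_Un R_def sm by (rule refl)
      qed
      have ds: "dim (span U) + dim (S m \<inter> R) = dim (S m) + dim R"
        using dim_sums_Int[OF subm, of R] sums unfolding R_def by simp
      have "D = dim (S m) + (\<Sum>l\<in>L. dim (S l))"
        unfolding D_def L_def using sum.remove[of "{1..n}" m "\<lambda>l. dim (S l)"] m(1) by simp
      then have "dim (S m \<inter> R) = 0" using ds dimR DU dim_span[of U] by linarith
      then have int0: "S m \<inter> R \<subseteq> {0}" by simp
      define w where "w = (\<Sum>i=1..N. if x i \<in> S m then 0 else c i *\<^sub>R x i)"
      define v where "v = (\<Sum>i=1..N. if x i \<in> S m then c i *\<^sub>R x i else 0)"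
      have "v + w = (\<Sum>i=1..N. c i *\<^sub>R x i)"
        unfolding v_def w_def sum.distrib[symmetric] by (rule sum.cong) auto
      then have vw: "v + w = x j" using feas unfolding feasible_coef_def by simp
      have vS: "v \<in> S m" unfolding v_def
        by (rule subspace_sum[OF subm]) (auto simp: subspace_scale[OF subm] subspace_0[OF subm])
      have "w = x j - v" using vw by (simp add: algebra_simps)
      then have wS: "w \<in> S m" using vS m(2) subspace_diff[OF subm] by simp
      have wR: "w \<in> R" unfolding w_def R_def
      proof (rule span_sum)
        fix i assume i: "i \<in> {1..N}"
        show "(if x i \<in> S m then 0 else c i *\<^sub>R x i) \<in> span (\<Union>l\<in>L. S l)"
        proof (cases "x i \<in> S m")
          case True then show ?thesis by (simp add: span_zero)
        next
          case False
          then obtain l where "l \<in> {1..n}" "x i \<in> S l" using in_union i by blast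
          then have "x i \<in> (\<Union>l\<in>L. S l)" using False unfolding L_def by blast
          then show ?thesis using False by (simp add: span_base span_scale)
        qed
      qed
      have w0: "w = 0" using wS wR int0 by blast
      define c' where "c' = (\<lambda>i. if x i \<in> S m then c i else 0)"
      have "(\<Sum>i=1..N. c' i *\<^sub>R x i) = v" unfolding v_def c'_def by (rule sum.cong) auto
      then have feas': "feasible_coef N x (x j) (X0 k) c'"
        using feas vw w0 unfolding feasible_coef_def c'_def by auto
      have "f_inf N x (x j) (X0 k) \<le> ereal (l1norm N c')"
        unfolding f_inf_def using feas' by (intro Inf_lower) blast
      then have "ereal (l1norm N c) \<le> ereal (l1norm N c')" by (simp only: fopt)
      then have cle: "l1norm N c \<le> l1norm N c'" by simp
      show "subspace_preserving n S N x (x j) c"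
        unfolding subspace_preserving_def
      proof (intro ballI impI)
        fix i assume i: "i \<in> {1..N}" and ci: "c i \<noteq> 0"
        have "x i \<in> S m"
        proof (rule ccontr)
          assume "x i \<notin> S m"
          then have "\<bar>c' i\<bar> < \<bar>c i\<bar>" using ci by (simp add: c'_def)
          moreover have "\<forall>i\<in>{1..N}. \<bar>c' i\<bar> \<le> \<bar>c i\<bar>" by (simp add: c'_def)
          ultimately have "l1norm N c' < l1norm N c" unfolding l1norm_def
            using sum_strict_mono_ex1[of "{1..N}" "\<lambda>i. \<bar>c' i\<bar>" "\<lambda>i. \<bar>c i\<bar>"] i by blast
          then show False using cle by simp
        qed
        then show "\<exists>l\<in>{1..n}. x i \<in> S l \<and> x j \<in> S l" using m by blast
      qed
    qed
  qed
  show ?thesis using part1 part2 by blast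
qed

end
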